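(* Let $S$ be a semigroup and $\mu$ a finitely-additive probability measure on $S$. If $\mu$ is right fairly invariant, then any two $\mathcal L$-classes contained in the same $\mathcal D$-class have equal $\mu$-measure. If $\mu$ is left fairly invariant, then any two $\mathcal R$-classes contained in the same $\mathcal D$-class have equal $\mu$-measure. If $\mu$ is both left and right fairly invariant, then any two $\mathcal H$-classes contained in the same $\mathcal D$-class have equal $\mu$-measure.
   Context: Green's relations on $S$: $a\,\mathcal L\,b$ iff $S^1a=S^1b$; $a\,\mathcal R\,b$ iff $aS^1=bS^1$; $\mathcal H=\mathcal L\cap\mathcal R$; $\mathcal D=\mathcal L\circ\mathcal R$. $s$ acts injectively on the left (right) of $A\subseteq S$ if $a\mapsto sa$ ($a\mapsto as$) is injective on $A$. A finitely-additive probability measure is $\mu:\mathcal P(S)\to[0,1]$ with $\mu(S)=1$, additive on disjoint sets; it is left fairly invariant if $\mu(sA)=\mu(A)$ whenever $s$ acts injectively on the left of $A$, right fairly invariant if $\mu(As)=\mu(A)$ whenever $s$ acts injectively on the right of $A$. *)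

theory Defs
  imports Complex_Main
begin

text \<open>The semigroup S is the whole carrier of a type of class semigroup_mult.
  S^1 a = {a} \<union> S a and a S^1 = {a} \<union> a S.\<close>

definition left_ideal1 :: "'a::semigroup_mult \<Rightarrow> 'a set" where
  "left_ideal1 a = insert a {s * a | s. True}"

definition right_ideal1 :: "'a::semigroup_mult \<Rightarrow> 'a set" where
  "right_ideal1 a = insert a {a * s | s. True}"

definition greenL :: "'a::semigroup_mult \<Rightarrow> 'a \<Rightarrow> bool" where
  "greenL a b \<longleftrightarrow> left_ideal1 a = left_ideal1 b"

definition greenR :: "'a::semigroup_mult \<Rightarrow> 'a \<Rightarrow> bool" where
  "greenR a b \<longleftrightarrow> right_ideal1 a = right_ideal1 b"

definition greenH :: "'a::semigroup_mult \<Rightarrow> 'a \<Rightarrow> bool" where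
  "greenH a b \<longleftrightarrow> greenL a b \<and> greenR a b"

definition greenD :: "'a::semigroup_mult \<Rightarrow> 'a \<Rightarrow> bool" where
  "greenD a b \<longleftrightarrow> (\<exists>c. greenL a c \<and> greenR c b)"

definition Lclass :: "'a::semigroup_mult \<Rightarrow> 'a set" where
  "Lclass a = {b. greenL a b}"

definition Rclass :: "'a::semigroup_mult \<Rightarrow> 'a set" where
  "Rclass a = {b. greenR a b}"

definition Hclass :: "'a::semigroup_mult \<Rightarrow> 'a set" where
  "Hclass a = {b. greenH a b}"

definition fa_prob_measure :: "('a set \<Rightarrow> real) \<Rightarrow> bool" where
  "fa_prob_measure \<mu> \<longleftrightarrow>
     (\<forall>A. 0 \<le> \<mu> A \<and> \<mu> A \<le> 1) \<and> \<mu> UNIV = 1 \<and>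
     (\<forall>A B. A \<inter> B = {} \<longrightarrow> \<mu> (A \<union> B) = \<mu> A + \<mu> B)"

definition left_fairly_invariant :: "('a::semigroup_mult set \<Rightarrow> real) \<Rightarrow> bool" where
  "left_fairly_invariant \<mu> \<longleftrightarrow>
     (\<forall>s A. inj_on (\<lambda>a. s * a) A \<longrightarrow> \<mu> ((\<lambda>a. s * a) ` A) = \<mu> A)"

definition right_fairly_invariant :: "('a::semigroup_mult set \<Rightarrow> real) \<Rightarrow> bool" where
  "right_fairly_invariant \<mu> \<longleftrightarrow>
     (\<forall>s A. inj_on (\<lambda>a. a * s) A \<longrightarrow> \<mu> ((\<lambda>a. a * s) ` A) = \<mu> A)"

end

theory Submission
  imports Defs
begin

definition ldiv :: "'a::semigroup_mult \<Rightarrow> 'a \<Rightarrow> bool" where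
  "ldiv x y \<longleftrightarrow> x = y \<or> (\<exists>u. x = u * y)"
definition rdiv :: "'a::semigroup_mult \<Rightarrow> 'a \<Rightarrow> bool" where
  "rdiv x y \<longleftrightarrow> x = y \<or> (\<exists>u. x = y * u)"

lemma ldiv_trans: "ldiv x y \<Longrightarrow> ldiv y z \<Longrightarrow> ldiv x z"
  unfolding ldiv_def by (metis mult.assoc)
lemma rdiv_trans: "rdiv x y \<Longrightarrow> rdiv y z \<Longrightarrow> rdiv x z"
  unfolding rdiv_def by (metis mult.assoc)
lemma ldiv_mr: "ldiv x y \<Longrightarrow> ldiv (x*s) (y*s)"
  unfolding ldiv_def by (metis mult.assoc)
lemma rdiv_ml: "rdiv x y \<Longrightarrow> rdiv (s*x) (s*y)"
  unfolding rdiv_def by (metis mult.assoc)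

lemma li: "left_ideal1 x = {z. ldiv z x}"
  unfolding left_ideal1_def ldiv_def by auto
lemma ri: "right_ideal1 x = {z. rdiv z x}"
  unfolding right_ideal1_def rdiv_def by auto

lemma greenL_iff: "greenL x y \<longleftrightarrow> ldiv x y \<and> ldiv y x"
  unfolding greenL_def li
  by (auto simp: ldiv_def) (metis ldiv_def ldiv_trans)+

lemma greenR_iff: "greenR x y \<longleftrightarrow> rdiv x y \<and> rdiv y x"
  unfolding greenR_def ri
  by (auto simp: rdiv_def) (metis rdiv_def rdiv_trans)+

lemma ldiv_refl: "ldiv x x" by (simp add: ldiv_def)
lemma rdiv_refl: "rdiv x x" by (simp add: rdiv_def)

lemma L_sym: "greenL x y \<Longrightarrow> greenL y x" by (auto simp: greenL_iff)
lemma R_sym: "greenR x y \<Longrightarrow> greenR y x" by (auto simp: greenR_iff)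
lemma L_trans: "greenL x y \<Longrightarrow> greenL y z \<Longrightarrow> greenL x z"
  by (auto simp: greenL_iff intro: ldiv_trans)
lemma R_trans: "greenR x y \<Longrightarrow> greenR y z \<Longrightarrow> greenR x z"
  by (auto simp: greenR_iff intro: rdiv_trans)

lemma Lclass_eq: "greenL a c \<Longrightarrow> Lclass a = Lclass c"
  unfolding Lclass_def using L_sym L_trans by blast
lemma Rclass_eq: "greenR a c \<Longrightarrow> Rclass a = Rclass c"
  unfolding Rclass_def using R_sym R_trans by blast
lemma Hclass_eq: "greenH a c \<Longrightarrow> Hclass a = Hclass c"
  unfolding Hclass_def greenH_def using R_sym R_trans L_sym L_trans by blast

lemma rinv:
  assumes "right_fairly_invariant \<mu>" "inj_on (\<lambda>a. a * s) A" "(\<lambda>a. a * s) ` A = B"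
  shows "\<mu> A = \<mu> B"
  using assms unfolding right_fairly_invariant_def by metis
lemma linv:
  assumes "left_fairly_invariant \<mu>" "inj_on (\<lambda>a. s * a) A" "(\<lambda>a. s * a) ` A = B"
  shows "\<mu> A = \<mu> B"
  using assms unfolding left_fairly_invariant_def by metis

lemma rt_cancel:
  assumes "b = c * s" "c = b * t" "ldiv x c"
  shows "x * s * t = x"
proof -
  have cst: "c * s * t = c" using assms(1,2) by metis
  show ?thesis using assms(3) unfolding ldiv_def
    by (metis cst mult.assoc)
qed

lemma right_case:
  assumes "b = c * s" "c = b * t"
  shows "inj_on (\<lambda>a. a * s) (Lclass c) \<and> (\<lambda>a. a * s) ` (Lclass c) = Lclass b
       \<and> inj_on (\<lambda>a. a * s) (Hclass c) \<and> (\<lambda>a. a * s) ` (Hclass c) = Hclass b"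
proof -
  have canc: "x * s * t = x" if "ldiv x c" for x using rt_cancel[OF assms that] .
  have canc2: "y * t * s = y" if "ldiv y b" for y using rt_cancel[OF assms(2) assms(1) that] .
  have mapL: "greenL b (x * s)" if "greenL c x" for x
    using that ldiv_mr[of x c s] ldiv_mr[of c x s] unfolding assms(1) by (auto simp: greenL_iff)
  have mapL2: "greenL c (y * t)" if "greenL b y" for y
    using that ldiv_mr[of y b t] ldiv_mr[of b y t] unfolding assms(2) by (auto simp: greenL_iff)
  have Rx: "greenR x (x * s)" if "greenL c x" for x
  proof -
    have e: "x = x * s * t" using canc that by (simp add: greenL_iff)
    then show ?thesis unfolding greenR_iff rdiv_def by blast
  qed
  have Ry: "greenR y (y * t)" if "greenL b y" for y
  proof -
    have e: "y = y * t * s" using canc2 that by (simp add: greenL_iff)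
    then show ?thesis unfolding greenR_iff rdiv_def by blast
  qed
  have cb: "greenR c b" using assms unfolding greenR_iff rdiv_def by blast
  have injL: "inj_on (\<lambda>a. a * s) (Lclass c)"
  proof (rule inj_onI)
    fix x y assume "x \<in> Lclass c" "y \<in> Lclass c" "x * s = y * s"
    then have "ldiv x c" "ldiv y c" "x * s = y * s" by (simp_all add: Lclass_def greenL_iff)
    then have a: "x * s * t = x" and b: "y * s * t = y" and e: "x * s = y * s" using canc by blast+
    have "x = x * s * t" using a by simp
    also have "\<dots> = y * s * t" using e by simp
    also have "\<dots> = y" using b by simp
    finally show "x = y" .
  qed
  have imL: "(\<lambda>a. a * s) ` (Lclass c) = Lclass b"
  proof
    show "(\<lambda>a. a * s) ` Lclass c \<subseteq> Lclass b" using mapL by (auto simp: Lclass_def)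
    show "Lclass b \<subseteq> (\<lambda>a. a * s) ` Lclass c"
    proof
      fix y assume "y \<in> Lclass b"
      hence y: "greenL b y" by (simp add: Lclass_def)
      hence "y = y * t * s" using canc2 by (simp add: greenL_iff)
      moreover have "y * t \<in> Lclass c" using mapL2 y by (simp add: Lclass_def)
      ultimately show "y \<in> (\<lambda>a. a * s) ` Lclass c" by blast
    qed
  qed
  have HL: "Hclass c \<subseteq> Lclass c" "Hclass b \<subseteq> Lclass b"
    by (auto simp: Hclass_def Lclass_def greenH_def)
  have imH: "(\<lambda>a. a * s) ` (Hclass c) = Hclass b"
  proof
    show "(\<lambda>a. a * s) ` Hclass c \<subseteq> Hclass b"
    proof
      fix z assume "z \<in> (\<lambda>a. a * s) ` Hclass c"
      then obtain x where x: "greenL c x" "greenR c x" "z = x * s"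
        by (auto simp: Hclass_def greenH_def)
      have "greenR b z" using x Rx cb by (meson R_sym R_trans)
      then show "z \<in> Hclass b" using mapL x by (simp add: Hclass_def greenH_def)
    qed
    show "Hclass b \<subseteq> (\<lambda>a. a * s) ` Hclass c"
    proof
      fix y assume "y \<in> Hclass b"
      hence y: "greenL b y" "greenR b y" by (auto simp: Hclass_def greenH_def)
      have e: "y = y * t * s" using canc2 y by (simp add: greenL_iff)
      have "greenR c (y * t)" using y Ry cb by (meson R_sym R_trans)
      moreover have "greenL c (y * t)" using mapL2 y by simp
      ultimately have "y * t \<in> Hclass c" by (simp add: Hclass_def greenH_def)
      note this e
      then show "y \<in> (\<lambda>a. a * s) ` Hclass c" by blast
    qed
  qed
  have "inj_on (\<lambda>a. a * s) (Hclass c)" using injL HL(1) by (rule inj_on_subset)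
  then show ?thesis using injL imL imH by blast
qed

lemma lt_cancel:
  assumes "b = s * c" "c = t * b" "rdiv x c"
  shows "t * (s * x) = x"
proof -
  have cst: "t * (s * c) = c" using assms(1,2) by metis
  show ?thesis using assms(3) unfolding rdiv_def
    by (metis cst mult.assoc)
qed

lemma left_case:
  assumes "b = s * c" "c = t * b"
  shows "inj_on (\<lambda>a. s * a) (Rclass c) \<and> (\<lambda>a. s * a) ` (Rclass c) = Rclass b
       \<and> inj_on (\<lambda>a. s * a) (Hclass c) \<and> (\<lambda>a. s * a) ` (Hclass c) = Hclass b"
proof -
  have canc: "t * (s * x) = x" if "rdiv x c" for x using lt_cancel[OF assms that] .
  have canc2: "s * (t * y) = y" if "rdiv y b" for y using lt_cancel[OF assms(2) assms(1) that] .
  have mapR: "greenR b (s * x)" if "greenR c x" for x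
    using that rdiv_ml[of x c s] rdiv_ml[of c x s] unfolding assms(1) by (auto simp: greenR_iff)
  have mapR2: "greenR c (t * y)" if "greenR b y" for y
    using that rdiv_ml[of y b t] rdiv_ml[of b y t] unfolding assms(2) by (auto simp: greenR_iff)
  have Lx: "greenL x (s * x)" if "greenR c x" for x
  proof -
    have "x = t * (s * x)" using canc that by (simp add: greenR_iff)
    then show ?thesis unfolding greenL_iff ldiv_def by blast
  qed
  have Ly: "greenL y (t * y)" if "greenR b y" for y
  proof -
    have "y = s * (t * y)" using canc2 that by (simp add: greenR_iff)
    then show ?thesis unfolding greenL_iff ldiv_def by blast
  qed
  have cb: "greenL c b" using assms unfolding greenL_iff ldiv_def by blast
  have injR: "inj_on (\<lambda>a. s * a) (Rclass c)"
  proof (rule inj_onI)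
    fix x y assume "x \<in> Rclass c" "y \<in> Rclass c" "s * x = s * y"
    then have "rdiv x c" "rdiv y c" "s * x = s * y" by (simp_all add: Rclass_def greenR_iff)
    then have a: "t * (s * x) = x" and b: "t * (s * y) = y" and e: "s * x = s * y" using canc by blast+
    have "x = t * (s * x)" using a by simp
    also have "\<dots> = t * (s * y)" using e by simp
    also have "\<dots> = y" using b by simp
    finally show "x = y" .
  qed
  have imR: "(\<lambda>a. s * a) ` (Rclass c) = Rclass b"
  proof
    show "(\<lambda>a. s * a) ` Rclass c \<subseteq> Rclass b" using mapR by (auto simp: Rclass_def)
    show "Rclass b \<subseteq> (\<lambda>a. s * a) ` Rclass c"
    proof
      fix y assume "y \<in> Rclass b"
      hence y: "greenR b y" by (simp add: Rclass_def)
      hence "y = s * (t * y)" using canc2 by (simp add: greenR_iff)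
      moreover have "t * y \<in> Rclass c" using mapR2 y by (simp add: Rclass_def)
      ultimately show "y \<in> (\<lambda>a. s * a) ` Rclass c" by blast
    qed
  qed
  have HR: "Hclass c \<subseteq> Rclass c" "Hclass b \<subseteq> Rclass b"
    by (auto simp: Hclass_def Rclass_def greenH_def)
  have imH: "(\<lambda>a. s * a) ` (Hclass c) = Hclass b"
  proof
    show "(\<lambda>a. s * a) ` Hclass c \<subseteq> Hclass b"
    proof
      fix z assume "z \<in> (\<lambda>a. s * a) ` Hclass c"
      then obtain x where x: "greenL c x" "greenR c x" "z = s * x"
        by (auto simp: Hclass_def greenH_def)
      have "greenL b z" using x Lx cb by (meson L_sym L_trans)
      then show "z \<in> Hclass b" using mapR x by (simp add: Hclass_def greenH_def)
    qed
    show "Hclass b \<subseteq> (\<lambda>a. s * a) ` Hclass c"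
    proof
      fix y assume "y \<in> Hclass b"
      hence y: "greenL b y" "greenR b y" by (auto simp: Hclass_def greenH_def)
      have e: "y = s * (t * y)" using canc2 y by (simp add: greenR_iff)
      have "greenL c (t * y)" using y Ly cb by (meson L_sym L_trans)
      moreover have "greenR c (t * y)" using mapR2 y by simp
      ultimately have "t * y \<in> Hclass c" by (simp add: Hclass_def greenH_def)
      note this e
      then show "y \<in> (\<lambda>a. s * a) ` Hclass c" by blast
    qed
  qed
  have "inj_on (\<lambda>a. s * a) (Hclass c)" using injR HR(1) by (rule inj_on_subset)
  then show ?thesis using injR imR imH by blast
qed

lemma R_cases:
  assumes "greenR c b"
  obtains "c = b" | s t where "b = c * s" "c = b * t"
  using assms unfolding greenR_iff rdiv_def by metis
lemma L_cases:
  assumes "greenL a c"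
  obtains "a = c" | s t where "a = s * c" "c = t * a"
  using assms unfolding greenL_iff ldiv_def by metis

theorem mainTheorem10:
  fixes \<mu> :: "'a::semigroup_mult set \<Rightarrow> real"
  assumes "fa_prob_measure \<mu>"
  shows "(right_fairly_invariant \<mu> \<longrightarrow>
            (\<forall>a b. greenD a b \<longrightarrow> \<mu> (Lclass a) = \<mu> (Lclass b)))
       \<and> (left_fairly_invariant \<mu> \<longrightarrow>
            (\<forall>a b. greenD a b \<longrightarrow> \<mu> (Rclass a) = \<mu> (Rclass b)))
       \<and> (left_fairly_invariant \<mu> \<and> right_fairly_invariant \<mu> \<longrightarrow>
            (\<forall>a b. greenD a b \<longrightarrow> \<mu> (Hclass a) = \<mu> (Hclass b)))"
proof (intro conjI impI allI)
  fix a b :: 'a assume ri: "right_fairly_invariant \<mu>" and "greenD a b"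
  then obtain c :: 'a where ac: "greenL a c" and cb: "greenR c b" by (auto simp: greenD_def)
  have "\<mu> (Lclass c) = \<mu> (Lclass b)"
    using cb proof (cases rule: R_cases)
    case 1 then show ?thesis by simp
  next
    case (2 s t)
    have "inj_on (\<lambda>a. a * s) (Lclass c)" "(\<lambda>a. a * s) ` (Lclass c) = Lclass b"
      using right_case[OF 2] by blast+
    then show ?thesis by (rule rinv[OF ri])
  qed
  then show "\<mu> (Lclass a) = \<mu> (Lclass b)" using Lclass_eq[OF ac] by simp
next
  fix a b :: 'a assume li: "left_fairly_invariant \<mu>" and "greenD a b"
  then obtain c :: 'a where ac: "greenL a c" and cb: "greenR c b" by (auto simp: greenD_def)
  have "\<mu> (Rclass c) = \<mu> (Rclass a)"
    using ac proof (cases rule: L_cases)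
    case 1 then show ?thesis by simp
  next
    case (2 s t)
    have "inj_on (\<lambda>x. s * x) (Rclass c)" "(\<lambda>x. s * x) ` (Rclass c) = Rclass a"
      using left_case[OF 2] by blast+
    then show ?thesis by (rule linv[OF li])
  qed
  then show "\<mu> (Rclass a) = \<mu> (Rclass b)" using Rclass_eq[OF cb] by simp
next
  fix a b :: 'a assume inv: "left_fairly_invariant \<mu> \<and> right_fairly_invariant \<mu>" and "greenD a b"
  then obtain c :: 'a where ac: "greenL a c" and cb: "greenR c b" by (auto simp: greenD_def)
  have 1: "\<mu> (Hclass c) = \<mu> (Hclass b)"
    using cb proof (cases rule: R_cases)
    case 1 then show ?thesis by simp
  next
    case (2 s t)
    have "inj_on (\<lambda>a. a * s) (Hclass c)" "(\<lambda>a. a * s) ` (Hclass c) = Hclass b"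
      using right_case[OF 2] by blast+
    then show ?thesis using inv rinv by blast
  qed
  have 2: "\<mu> (Hclass c) = \<mu> (Hclass a)"
    using ac proof (cases rule: L_cases)
    case 1 then show ?thesis by simp
  next
    case (2 s t)
    have "inj_on (\<lambda>x. s * x) (Hclass c)" "(\<lambda>x. s * x) ` (Hclass c) = Hclass a"
      using left_case[OF 2] by blast+
    then show ?thesis using inv linv by blast
  qed
  show "\<mu> (Hclass a) = \<mu> (Hclass b)" using 1 2 by simp
qed

end
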